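(* For all integers $n\ge k\ge 2$ and $r\ge 0$, \[ \mathsf{opt}_{\operatorname{bandit}}^{\operatorname{adap}}(n,k,r)\ge \frac{(k-1)r}{2}. \]
   Context: Prediction with expert advice: $\mathcal{Y}=\{1,\dots,k\}$, $\mathcal{X}=[k]^n$, experts $h_i(x)=x_i$, $i=1,\dots,n$. $\mathcal{P}_r$ is the set of finite sequences of examples in $\mathcal{X}\times\mathcal{Y}$ on which some $h_i$ errs on at most $r$ examples. Bandit feedback: each round an adaptive adversary chooses $x_t$ from the history, the learner chooses a distribution $\pi^{(t)}$ (from history and $x_t$), the adversary, seeing $\pi^{(t)}$, chooses a distribution $\tau^{(t)}$; $\hat y_t\sim\pi^{(t)}$, $y_t\sim\tau^{(t)}$, and the learner learns only whether $\hat y_t=y_t$. The adversary must ensure that whenever the history is realizable, each $y_t$ in the support of $\tau^{(t)}$ keeps it realizable, where a history of (instance, correct/incorrect, prediction) triples is realizable if some choice of true labels agreeing with the observations yields a sequence in $\mathcal{P}_r$. $\mathsf{opt}_{\operatorname{bandit}}^{\operatorname{adap}}(n,k,r)=\inf_{\text{learner}}\sup_{\text{adversary}}$ expected number of mistakes ($\hat y_t\ne y_t$). *)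

theory Defs
  imports "HOL-Probability.Probability"
begin

text \<open>Expert i (0-indexed, i < n) predicts x ! i.
  A history is a list of triples (instance, prediction correct?, prediction).\<close>

type_synonym inst = "nat list"
type_synonym hist = "(inst \<times> bool \<times> nat) list"

definition inst_space :: "nat \<Rightarrow> nat \<Rightarrow> inst set" where
  "inst_space n k = {x. length x = n \<and> set x \<subseteq> {1..k}}"

definition in_P :: "nat \<Rightarrow> nat \<Rightarrow> nat \<Rightarrow> (inst \<times> nat) list \<Rightarrow> bool" where
  "in_P n k r S \<longleftrightarrow>
     (\<forall>(x, y) \<in> set S. x \<in> inst_space n k \<and> y \<in> {1..k}) \<and>
     (\<exists>i<n. card {j. j < length S \<and> fst (S ! j) ! i \<noteq> snd (S ! j)} \<le> r)"

definition realizable :: "nat \<Rightarrow> nat \<Rightarrow> nat \<Rightarrow> hist \<Rightarrow> bool" where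
  "realizable n k r h \<longleftrightarrow>
     (\<exists>ys. length ys = length h \<and>
        (\<forall>j<length h. (fst (snd (h ! j)) \<longleftrightarrow> ys ! j = snd (snd (h ! j)))) \<and>
        in_P n k r (zip (map fst h) ys))"

definition learner_ok :: "nat \<Rightarrow> (hist \<Rightarrow> inst \<Rightarrow> nat pmf) \<Rightarrow> bool" where
  "learner_ok k L \<longleftrightarrow> (\<forall>h x. set_pmf (L h x) \<subseteq> {1..k})"

definition adversary_ok :: "nat \<Rightarrow> nat \<Rightarrow> nat \<Rightarrow> (hist \<Rightarrow> inst \<Rightarrow> nat pmf)
    \<Rightarrow> (hist \<Rightarrow> inst) \<Rightarrow> (hist \<Rightarrow> inst \<Rightarrow> nat pmf \<Rightarrow> nat pmf) \<Rightarrow> bool" where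
  "adversary_ok n k r L AX AY \<longleftrightarrow>
     (\<forall>h. AX h \<in> inst_space n k) \<and>
     (\<forall>h x p. set_pmf (AY h x p) \<subseteq> {1..k}) \<and>
     (\<forall>h. realizable n k r h \<longrightarrow>
        (\<forall>y \<in> set_pmf (AY h (AX h) (L h (AX h))).
           \<forall>yh \<in> set_pmf (L h (AX h)).
             realizable n k r (h @ [(AX h, yh = y, yh)])))"

primrec exp_mistakes :: "(hist \<Rightarrow> inst \<Rightarrow> nat pmf) \<Rightarrow> (hist \<Rightarrow> inst)
    \<Rightarrow> (hist \<Rightarrow> inst \<Rightarrow> nat pmf \<Rightarrow> nat pmf) \<Rightarrow> nat \<Rightarrow> hist \<Rightarrow> ennreal" where
  "exp_mistakes L AX AY 0 h = 0"
| "exp_mistakes L AX AY (Suc T) h =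
     (let x = AX h; p = L h x; q = AY h x p in
      \<integral>\<^sup>+ yh. (\<integral>\<^sup>+ y. ((if yh \<noteq> y then 1 else 0)
                     + exp_mistakes L AX AY T (h @ [(x, yh = y, yh)])) \<partial>measure_pmf q)
        \<partial>measure_pmf p)"

text \<open>Total expected number of mistakes = supremum over horizons (monotone convergence).\<close>
definition opt_bandit_adap :: "nat \<Rightarrow> nat \<Rightarrow> nat \<Rightarrow> ennreal" where
  "opt_bandit_adap n k r =
     (INF L \<in> {L. learner_ok k L}.
        SUP A \<in> {(AX, AY). adversary_ok n k r L AX AY}.
          SUP T. exp_mistakes L (fst A) (snd A) T [])"

end

theory Submission
  imports Defs
begin

lemma integ_lemma:
  fixes p :: "nat pmf" and c d :: real
  shows "(\<integral>x. c + d * indicator {y0} x \<partial>measure_pmf p) = c + d * pmf p y0"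
  and "integrable (measure_pmf p) (\<lambda>x. c + d * indicator {y0} x)"
proof -
  have i: "integrable (measure_pmf p) (\<lambda>x. indicator {y0} x :: real)"
    by (rule measure_pmf.integrable_const_bound[where B=1]) (auto split: split_indicator)
  show "integrable (measure_pmf p) (\<lambda>x. c + d * indicator {y0} x)"
    using i by auto
  show "(\<integral>x. c + d * indicator {y0} x \<partial>measure_pmf p) = c + d * pmf p y0"
    using i by (simp add: measure_pmf_single)
qed

lemma nnint_lemma:
  fixes p :: "nat pmf" and c d :: real
  assumes "\<And>x. 0 \<le> c + d * indicator {y0} x"
  shows "(\<integral>\<^sup>+x. ennreal (c + d * indicator {y0} x) \<partial>measure_pmf p) = ennreal (c + d * pmf p y0)"
  apply (subst nn_integral_eq_integral)
  using assms integ_lemma by auto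

definition x0 :: "nat \<Rightarrow> nat \<Rightarrow> inst" where
  "x0 n k = map Suc [0..<k] @ replicate (n - k) 1"

definition good :: "nat \<Rightarrow> nat \<Rightarrow> hist \<Rightarrow> bool" where
  "good n k h \<longleftrightarrow> (\<forall>e\<in>set h. fst e = x0 n k \<and> snd (snd e) \<in> {1..k})"

definition errP :: "nat \<Rightarrow> inst \<times> bool \<times> nat \<Rightarrow> bool" where
  "errP i e \<longleftrightarrow> (fst (snd e) \<and> snd (snd e) \<noteq> Suc i) \<or> (\<not> fst (snd e) \<and> snd (snd e) = Suc i)"

definition errc :: "nat \<Rightarrow> hist \<Rightarrow> nat" where
  "errc i h = length (filter (errP i) h)"

definition Phi :: "nat \<Rightarrow> hist \<Rightarrow> nat" where
  "Phi k h = (\<Sum>i<k. errc i h)"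

definition ymin :: "nat \<Rightarrow> nat pmf \<Rightarrow> nat" where
  "ymin k p = (SOME y. y \<in> {1..k} \<and> pmf p y \<le> 1 / real k)"

definition wit :: "nat \<Rightarrow> nat \<Rightarrow> nat \<Rightarrow> hist \<Rightarrow> nat \<Rightarrow> bool" where
  "wit n k r h i \<longleftrightarrow> i < n \<and> (\<exists>ys. length ys = length h \<and>
        (\<forall>j<length h. (fst (snd (h ! j)) \<longleftrightarrow> ys ! j = snd (snd (h ! j)))) \<and>
        in_P n k r (zip (map fst h) ys) \<and>
        card {j. j < length (zip (map fst h) ys) \<and> fst (zip (map fst h) ys ! j) ! i \<noteq> snd (zip (map fst h) ys ! j)} \<le> r)"

definition fb :: "nat \<Rightarrow> nat \<Rightarrow> nat \<Rightarrow> hist \<Rightarrow> inst \<Rightarrow> nat" where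
  "fb n k r h x = x ! (SOME i. wit n k r h i)"

definition clip :: "nat \<Rightarrow> nat \<Rightarrow> nat" where
  "clip k y = (if y \<in> {1..k} then y else 1)"

definition advY :: "nat \<Rightarrow> nat \<Rightarrow> nat \<Rightarrow> hist \<Rightarrow> inst \<Rightarrow> nat pmf \<Rightarrow> nat pmf" where
  "advY n k r h x p = return_pmf (clip k
     (if (\<forall>yh\<in>set_pmf p. realizable n k r (h @ [(x, yh = ymin k p, yh)])) then ymin k p else fb n k r h x))"

lemma x0_nth: "i < k \<Longrightarrow> x0 n k ! i = Suc i"
  by (simp add: x0_def nth_append)

lemma x0_space: "1 \<le> k \<Longrightarrow> k \<le> n \<Longrightarrow> x0 n k \<in> inst_space n k"
  by (auto simp: x0_def inst_space_def)

lemma ymin_prop: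
  assumes "1 \<le> k"
  shows "ymin k p \<in> {1..k} \<and> pmf p (ymin k p) \<le> 1 / real k"
proof -
  have "\<exists>y. y \<in> {1..k} \<and> pmf p y \<le> 1 / real k"
  proof (rule ccontr)
    assume "\<not> ?thesis"
    then have lt: "\<And>y. y \<in> {1..k} \<Longrightarrow> 1 / real k < pmf p y" by force
    have "(\<Sum>y\<in>{1..k}. 1 / real k) < (\<Sum>y\<in>{1..k}. pmf p y)"
      using assms by (intro sum_strict_mono) (auto intro: lt)
    moreover have "(\<Sum>y\<in>{1..k}. 1 / real k) = 1" using assms by simp
    moreover have "(\<Sum>y\<in>{1..k}. pmf p y) = measure (measure_pmf p) {1..k}"
      by (simp add: measure_measure_pmf_finite)
    moreover have "measure (measure_pmf p) {1..k} \<le> 1" by simp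
    ultimately show False by linarith
  qed
  then show ?thesis unfolding ymin_def by (rule someI_ex)
qed

lemma in_P_snoc:
  assumes "in_P n k r S" "i < n"
    "card {j. j < length S \<and> fst (S ! j) ! i \<noteq> snd (S ! j)} \<le> r"
    "x \<in> inst_space n k"
  shows "in_P n k r (S @ [(x, x ! i)])"
proof -
  have xi: "x ! i \<in> {1..k}" using assms(2,4) unfolding inst_space_def
    by (auto intro: nth_mem)
  have eq: "{j. j < length (S @ [(x, x ! i)]) \<and> fst ((S @ [(x, x ! i)]) ! j) ! i \<noteq> snd ((S @ [(x, x ! i)]) ! j)}
      = {j. j < length S \<and> fst (S ! j) ! i \<noteq> snd (S ! j)}"
    by (auto simp: nth_append less_Suc_eq)
  show ?thesis using assms(1) assms(2,3,4) xi unfolding in_P_def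
    apply (intro conjI)
     apply auto[1]
    using eq by (intro exI[of _ i]) simp
qed

lemma fallback:
  assumes R: "realizable n k r h" and x: "x \<in> inst_space n k"
  shows "fb n k r h x \<in> {1..k} \<and> realizable n k r (h @ [(x, yh = fb n k r h x, yh)])"
proof -
  obtain ys where ys: "length ys = length h"
      "\<forall>j<length h. (fst (snd (h ! j)) \<longleftrightarrow> ys ! j = snd (snd (h ! j)))"
      "in_P n k r (zip (map fst h) ys)"
    using R unfolding realizable_def by blast
  then obtain i where "i < n" "card {j. j < length (zip (map fst h) ys) \<and> fst (zip (map fst h) ys ! j) ! i \<noteq> snd (zip (map fst h) ys ! j)} \<le> r"
    unfolding in_P_def by blast
  then have "wit n k r h i" using ys unfolding wit_def by blast
  define i' where "i' = (SOME i. wit n k r h i)"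
  have W: "wit n k r h i'" unfolding i'_def by (rule someI) fact
  obtain ys' where ys': "i' < n" "length ys' = length h"
      "\<forall>j<length h. (fst (snd (h ! j)) \<longleftrightarrow> ys' ! j = snd (snd (h ! j)))"
      "in_P n k r (zip (map fst h) ys')"
      "card {j. j < length (zip (map fst h) ys') \<and> fst (zip (map fst h) ys' ! j) ! i' \<noteq> snd (zip (map fst h) ys' ! j)} \<le> r"
    using W unfolding wit_def by blast
  have fbe: "fb n k r h x = x ! i'" unfolding fb_def i'_def ..
  have mem: "x ! i' \<in> {1..k}" using ys'(1) x unfolding inst_space_def by (auto intro: nth_mem)
  have z: "zip (map fst (h @ [(x, yh = x ! i', yh)])) (ys' @ [x ! i']) = zip (map fst h) ys' @ [(x, x ! i')]"
    using ys'(2) by simp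
  have "in_P n k r (zip (map fst h) ys' @ [(x, x ! i')])"
    by (rule in_P_snoc[OF ys'(4) ys'(1) _ x]) (use ys'(5) in simp)
  then have "realizable n k r (h @ [(x, yh = x ! i', yh)])"
    unfolding realizable_def
    apply (intro exI[of _ "ys' @ [x ! i']"])
    using ys'(2,3) z by (auto simp: nth_append less_Suc_eq)
  then show ?thesis using mem fbe by simp
qed

lemma adv_ok:
  assumes k2: "2 \<le> k" and kn: "k \<le> n"
  shows "adversary_ok n k r L (\<lambda>_. x0 n k) (advY n k r)"
proof -
  have xs: "x0 n k \<in> inst_space n k" using x0_space k2 kn by simp
  have ym: "\<And>p. ymin k p \<in> {1..k}" using ymin_prop k2 by simp
  show ?thesis
    unfolding adversary_ok_def
  proof (intro conjI allI impI ballI)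
    show "\<And>h. x0 n k \<in> inst_space n k" using xs .
    show "\<And>h x p. set_pmf (advY n k r h x p) \<subseteq> {1..k}"
      using k2 by (auto simp: advY_def clip_def)
    fix h y yh
    assume R: "realizable n k r h"
      and y: "y \<in> set_pmf (advY n k r h (x0 n k) (L h (x0 n k)))"
      and yh: "yh \<in> set_pmf (L h (x0 n k))"
    show "realizable n k r (h @ [(x0 n k, yh = y, yh)])"
    proof (cases "\<forall>yh\<in>set_pmf (L h (x0 n k)). realizable n k r (h @ [(x0 n k, yh = ymin k (L h (x0 n k)), yh)])")
      case True
      then have "y = ymin k (L h (x0 n k))" using y ym[of "L h (x0 n k)"]
        by (simp add: advY_def clip_def)
      then show ?thesis using True yh by simp
    next
      case False
      have F: "fb n k r h (x0 n k) \<in> {1..k}" using fallback[OF R xs] by blast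
      then have "y = fb n k r h (x0 n k)" using y False
        by (simp add: advY_def clip_def)
      then show ?thesis using fallback[OF R xs] by blast
    qed
  qed
qed

lemma realizable_good:
  assumes k2: "2 \<le> k" and kn: "k \<le> n" and g: "good n k h" and i: "i < k" and e: "errc i h \<le> r"
  shows "realizable n k r h"
proof -
  define w where "w e = (if fst (snd e) then snd (snd e) else if snd (snd e) \<noteq> Suc i then Suc i
      else if snd (snd e) = 1 then 2 else 1)" for e :: "inst \<times> bool \<times> nat"
  have z: "zip (map fst h) (map w h) = map (\<lambda>e. (fst e, w e)) h" by (induction h) auto
  have wk: "\<And>e. e \<in> set h \<Longrightarrow> w e \<in> {1..k}" using g i k2 unfolding good_def w_def by auto
  have xs: "x0 n k \<in> inst_space n k" using x0_space k2 kn by simp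
  have fe: "filter (\<lambda>e. x0 n k ! i \<noteq> w e) h = filter (errP i) h"
    using i by (intro filter_cong) (auto simp: x0_nth w_def errP_def)
  have "card {j. j < length h \<and> x0 n k ! i \<noteq> w (h ! j)} = length (filter (\<lambda>e. x0 n k ! i \<noteq> w e) h)"
    by (simp add: length_filter_conv_card)
  also have "\<dots> \<le> r" using fe e by (simp add: errc_def)
  finally have c: "card {j. j < length h \<and> x0 n k ! i \<noteq> w (h ! j)} \<le> r" .
  have cg: "\<And>j. j < length h \<Longrightarrow> fst (h ! j) = x0 n k" using g unfolding good_def by auto
  have c2: "card {j. j < length h \<and> fst (h ! j) ! i \<noteq> w (h ! j)} \<le> r"
  proof -
    have "{j. j < length h \<and> fst (h ! j) ! i \<noteq> w (h ! j)} = {j. j < length h \<and> x0 n k ! i \<noteq> w (h ! j)}"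
      using cg by auto
    then show ?thesis using c by simp
  qed
  have inP: "in_P n k r (map (\<lambda>e. (fst e, w e)) h)"
    unfolding in_P_def
  proof (intro conjI)
    show "\<forall>(x, y)\<in>set (map (\<lambda>e. (fst e, w e)) h). x \<in> inst_space n k \<and> y \<in> {1..k}"
      using g xs wk unfolding good_def by auto
    show "\<exists>i<n. card {j. j < length (map (\<lambda>e. (fst e, w e)) h) \<and>
        fst (map (\<lambda>e. (fst e, w e)) h ! j) ! i \<noteq> snd (map (\<lambda>e. (fst e, w e)) h ! j)} \<le> r"
    proof (intro exI[of _ i] conjI)
      show "i < n" using i kn by simp
      have "{j. j < length (map (\<lambda>e. (fst e, w e)) h) \<and>
        fst (map (\<lambda>e. (fst e, w e)) h ! j) ! i \<noteq> snd (map (\<lambda>e. (fst e, w e)) h ! j)}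
        = {j. j < length h \<and> fst (h ! j) ! i \<noteq> w (h ! j)}" by auto
      then show "card {j. j < length (map (\<lambda>e. (fst e, w e)) h) \<and>
        fst (map (\<lambda>e. (fst e, w e)) h ! j) ! i \<noteq> snd (map (\<lambda>e. (fst e, w e)) h ! j)} \<le> r"
        using c2 by simp
    qed
  qed
  show ?thesis unfolding realizable_def
    apply (intro exI[of _ "map w h"])
    using inP z by (auto simp: w_def)
qed

lemma pigeon:
  assumes "Phi k h < k * (r + 1)"
  shows "\<exists>i<k. errc i h \<le> r"
proof (rule ccontr)
  assume "\<not> ?thesis"
  then have "\<forall>i\<in>{..<k}. r + 1 \<le> errc i h" by auto
  then have "card {..<k} * (r + 1) \<le> Phi k h" unfolding Phi_def
    using sum_bounded_below[of "{..<k}" "r+1" "\<lambda>i. errc i h"] by simp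
  then show False using assms by simp
qed

lemma errc_snoc: "errc i (h @ [e]) = errc i h + (if errP i e then 1 else 0)"
  by (simp add: errc_def)

lemma Phi_snoc:
  assumes "yh \<in> {1..k}"
  shows "Phi k (h @ [(x, c, yh)]) = Phi k h + (if c then k - 1 else 1)"
proof -
  have "Phi k (h @ [(x, c, yh)]) = (\<Sum>i<k. errc i h + (if errP i (x, c, yh) then 1 else 0))"
    unfolding Phi_def by (simp add: errc_snoc)
  also have "\<dots> = Phi k h + (\<Sum>i<k. (if errP i (x, c, yh) then 1 else 0))"
    unfolding Phi_def by (simp add: sum.distrib)
  also have "(\<Sum>i<k. (if errP i (x, c, yh) then 1 else 0)) = card ({..<k} \<inter> {i. errP i (x, c, yh)})"
    by (simp add: sum.If_cases)
  also have "\<dots> = (if c then k - 1 else 1)"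
  proof (cases c)
    case True
    then have "{..<k} \<inter> {i. errP i (x, c, yh)} = {..<k} - {yh - 1}"
      using assms by (auto simp: errP_def)
    moreover have "yh - 1 \<in> {..<k}" using assms by auto
    ultimately show ?thesis using True by (simp add: card_Diff_singleton)
  next
    case False
    then have "{..<k} \<inter> {i. errP i (x, c, yh)} = {yh - 1}"
      using assms by (auto simp: errP_def)
    then show ?thesis using False by simp
  qed
  finally show ?thesis .
qed


lemma aux_ineq: "\<lbrakk>- s / 2 \<le> (e::real); c = (a + 1) / 2; s \<le> 1\<rbrakk> \<Longrightarrow> a / 2 \<le> c + e"
  by (simp add: field_simps)

lemma main_ind:
  assumes k2: "2 \<le> k" and kn: "k \<le> n" and L: "learner_ok k L"
  shows "good n k h \<Longrightarrow> ennreal (real (min (Phi k h + T) (k * r + 1) - Phi k h) / 2)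
           \<le> exp_mistakes L (\<lambda>_. x0 n k) (advY n k r) T h"
proof (induction T arbitrary: h)
  case 0
  then show ?case by simp
next
  case (Suc T)
  define \<phi> where "\<phi> = Phi k h"
  define F where "F a t = real (min (a + t) (k * r + 1) - a) / 2" for a t :: nat
  have Fnn: "\<And>a t. 0 \<le> F a t" unfolding F_def by simp
  show ?case
  proof (cases "\<phi> \<le> k * r")
    case False
    then have "min (Phi k h + Suc T) (k * r + 1) - Phi k h = 0" unfolding \<phi>_def by simp
    then show ?thesis by simp
  next
    case True
    define p where "p = L h (x0 n k)"
    define y0 where "y0 = ymin k p"
    define q where "q = pmf p y0"
    have sp: "set_pmf p \<subseteq> {1..k}" using L unfolding learner_ok_def p_def by blast
    have y0: "y0 \<in> {1..k}" and qk: "q \<le> 1 / real k"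
      using ymin_prop[of k p] k2 unfolding y0_def q_def by auto
    have q0: "0 \<le> q" unfolding q_def by simp
    have gnew: "good n k (h @ [(x0 n k, yh = y0, yh)])" if "yh \<in> set_pmf p" for yh
      using Suc.prems sp that unfolding good_def by auto
    have phinew: "Phi k (h @ [(x0 n k, yh = y0, yh)]) = \<phi> + (if yh = y0 then k - 1 else 1)"
      if "yh \<in> set_pmf p" for yh
      using Phi_snoc[of yh k h "x0 n k" "yh = y0"] sp that unfolding \<phi>_def by auto
    have safe: "realizable n k r (h @ [(x0 n k, yh = y0, yh)])" if "yh \<in> set_pmf p" for yh
    proof -
      have "Phi k (h @ [(x0 n k, yh = y0, yh)]) < k * (r + 1)"
        using phinew[OF that] True k2 by (auto simp: algebra_simps)
      then obtain i where "i < k" "errc i (h @ [(x0 n k, yh = y0, yh)]) \<le> r"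
        using pigeon by blast
      then show ?thesis using realizable_good[OF k2 kn gnew[OF that]] by blast
    qed
    have AY: "advY n k r h (x0 n k) p = return_pmf y0"
      using safe y0 unfolding advY_def clip_def y0_def by auto
    have E: "exp_mistakes L (\<lambda>_. x0 n k) (advY n k r) (Suc T) h =
       (\<integral>\<^sup>+ yh. ((if yh \<noteq> y0 then 1 else 0) + exp_mistakes L (\<lambda>_. x0 n k) (advY n k r) T (h @ [(x0 n k, yh = y0, yh)])) \<partial>measure_pmf p)"
      by (simp add: AY p_def[symmetric] Let_def)
    define c where "c = 1 + F (\<phi> + 1) T"
    define d where "d = F (\<phi> + (k - 1)) T - c"
    have pw: "ennreal (c + d * indicator {y0} yh) \<le>
        (if yh \<noteq> y0 then 1 else 0) + exp_mistakes L (\<lambda>_. x0 n k) (advY n k r) T (h @ [(x0 n k, yh = y0, yh)])"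
      if yh: "yh \<in> set_pmf p" for yh
    proof (cases "yh = y0")
      case True
      have "ennreal (F (\<phi> + (k - 1)) T) \<le> exp_mistakes L (\<lambda>_. x0 n k) (advY n k r) T (h @ [(x0 n k, yh = y0, yh)])"
        using Suc.IH[OF gnew[OF yh]] phinew[OF yh] True unfolding F_def by simp
      then show ?thesis using True unfolding d_def by simp
    next
      case False
      have "ennreal (F (\<phi> + 1) T) \<le> exp_mistakes L (\<lambda>_. x0 n k) (advY n k r) T (h @ [(x0 n k, yh = y0, yh)])"
        using Suc.IH[OF gnew[OF yh]] phinew[OF yh] False unfolding F_def by simp
      then have "1 + ennreal (F (\<phi> + 1) T) \<le> 1 + exp_mistakes L (\<lambda>_. x0 n k) (advY n k r) T (h @ [(x0 n k, yh = y0, yh)])"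
        by (rule add_left_mono)
      then show ?thesis using False Fnn unfolding c_def by (simp add: ennreal_plus[symmetric])
    qed
    have nn: "\<And>x. 0 \<le> c + d * indicator {y0} x"
      unfolding d_def c_def using Fnn by (auto split: split_indicator intro: add_nonneg_nonneg)
    define A where "A = min (\<phi> + Suc T) (k * r + 1) - \<phi>"
    have A1: "F (\<phi> + 1) T = (real A - 1) / 2"
      unfolding F_def A_def using True by (simp add: of_nat_diff)
    have A2: "F (\<phi> + (k - 1)) T \<ge> (real A - real k + 1) / 2"
    proof -
      have "min (\<phi> + Suc T) (k * r + 1) \<le> min (\<phi> + (k - 1) + T) (k * r + 1)" using k2 by auto
      then have "real (min (\<phi> + Suc T) (k * r + 1)) - real (\<phi> + (k - 1)) \<le> real (min (\<phi> + (k - 1) + T) (k * r + 1) - (\<phi> + (k - 1)))"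
        by linarith
      moreover have "real A = real (min (\<phi> + Suc T) (k * r + 1)) - real \<phi>"
        unfolding A_def using True by (simp add: of_nat_diff)
      moreover have "real (k - 1) = real k - 1" using k2 by (simp add: of_nat_diff)
      ultimately show ?thesis unfolding F_def by simp
    qed
    have qk': "q * real k \<le> 1" using qk k2 by (simp add: field_simps)
    have key: "real A / 2 \<le> c + d * q"
    proof -
      have "d \<ge> (real A - real k + 1) / 2 - c" unfolding d_def using A2 by linarith
      then have "d * q \<ge> ((real A - real k + 1) / 2 - c) * q" using q0 by (rule mult_right_mono)
      moreover have "((real A - real k + 1) / 2 - c) * q = - (q * real k) / 2"
        unfolding c_def A1 by (simp add: field_simps)
      moreover have "c = (real A + 1) / 2" unfolding c_def A1 by (simp add: field_simps)
      ultimately have "d * q \<ge> - (q * real k) / 2" "c = (real A + 1) / 2" by linarith+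
      then show ?thesis using qk' by (intro aux_ineq)
    qed
    have "ennreal (real (min (Phi k h + Suc T) (k * r + 1) - Phi k h) / 2) = ennreal (real A / 2)"
      unfolding A_def \<phi>_def ..
    also have "\<dots> \<le> ennreal (c + d * q)" using key by (rule ennreal_leI)
    also have "\<dots> = (\<integral>\<^sup>+x. ennreal (c + d * indicator {y0} x) \<partial>measure_pmf p)"
      unfolding q_def by (rule nnint_lemma[symmetric]) (rule nn)
    also have "\<dots> \<le> (\<integral>\<^sup>+ yh. ((if yh \<noteq> y0 then 1 else 0) + exp_mistakes L (\<lambda>_. x0 n k) (advY n k r) T (h @ [(x0 n k, yh = y0, yh)])) \<partial>measure_pmf p)"
      by (rule nn_integral_mono_AE) (rule AE_pmfI, rule pw)
    also have "\<dots> = exp_mistakes L (\<lambda>_. x0 n k) (advY n k r) (Suc T) h" using E by simp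
    finally show ?thesis .
  qed
qed

theorem lemma4p11:
  fixes n k r :: nat
  assumes "2 \<le> k" and "k \<le> n"
  shows "ennreal (real (k - 1) * real r / 2) \<le> opt_bandit_adap n k r"
  unfolding opt_bandit_adap_def
proof (rule INF_greatest)
  fix L assume "L \<in> {L. learner_ok k L}"
  then have L: "learner_ok k L" by simp
  have g: "good n k []" by (simp add: good_def)
  have P0: "Phi k [] = 0" by (simp add: Phi_def errc_def)
  have "ennreal (real (k - 1) * real r / 2) \<le> ennreal (real (min (Phi k [] + (k * r + 1)) (k * r + 1) - Phi k []) / 2)"
    using assms by (intro ennreal_leI) (simp add: P0 of_nat_diff algebra_simps)
  also have "\<dots> \<le> exp_mistakes L (\<lambda>_. x0 n k) (advY n k r) (k * r + 1) []"
    by (rule main_ind[OF assms L g])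
  also have "\<dots> \<le> (SUP A \<in> {(AX, AY). adversary_ok n k r L AX AY}. SUP T. exp_mistakes L (fst A) (snd A) T [])"
    apply (rule SUP_upper2[where i="(\<lambda>_. x0 n k, advY n k r)"])
     apply (simp add: adv_ok[OF assms])
    apply (rule SUP_upper2[where i="k * r + 1"])
    by auto
  finally show "ennreal (real (k - 1) * real r / 2) \<le> (SUP A \<in> {(AX, AY). adversary_ok n k r L AX AY}. SUP T. exp_mistakes L (fst A) (snd A) T [])" .
qed

end
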